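(* Let $-1<p<0$, $a>0$, $\gamma>0$ and $\mu,d>0$. Then $\mathcal{I}(\mu,d)>-\infty$.
   Context: For real-valued $u\in H^1(\mathbb{R})\cap L^{p+2}(\mathbb{R})$ and $v\in L^2(\mathbb{R})\cap L^4(\mathbb{R})$ set \[ \tau(u,v)=\frac{2a}{p+2}\int_{\mathbb{R}}|u|^{p+2}+\int_{\mathbb{R}}vu^2+\frac{\gamma}{4}\int_{\mathbb{R}}v^4, \] \[ X_{\mu,d}=\{(u,v)\in (H^1\cap L^{p+2})\times(L^2\cap L^4):\ N_d(u,v):=\|u\|_2^2+\|u'\|_2^2+d\|v\|_2^2=\mu\}, \] and $\mathcal{I}(\mu,d)=\inf\{\tau(u,v):(u,v)\in X_{\mu,d}\}$. *)

theory Defs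
  imports "HOL-Analysis.Analysis"
begin

text \<open>Real-valued Lebesgue space L^q(R), 0 < q, as a set of functions (representatives).\<close>
definition Lp :: "real \<Rightarrow> (real \<Rightarrow> real) set" where
  "Lp q = {u. u \<in> borel_measurable lborel \<and> integrable lborel (\<lambda>x. \<bar>u x\<bar> powr q)}"

definition Lnorm2sq :: "(real \<Rightarrow> real) \<Rightarrow> real" where
  "Lnorm2sq u = (\<integral>x. (u x)\<^sup>2 \<partial>lborel)"

definition test_fun :: "(real \<Rightarrow> real) \<Rightarrow> bool" where
  "test_fun \<phi> \<longleftrightarrow> (\<forall>k::nat. \<forall>x. ((deriv ^^ k) \<phi>) differentiable (at x))
                    \<and> bounded {x. \<phi> x \<noteq> 0}"

definition weak_deriv :: "(real \<Rightarrow> real) \<Rightarrow> (real \<Rightarrow> real) \<Rightarrow> bool" where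
  "weak_deriv u w \<longleftrightarrow> (\<forall>\<phi>. test_fun \<phi> \<longrightarrow>
      (\<integral>x. u x * deriv \<phi> x \<partial>lborel) = - (\<integral>x. w x * \<phi> x \<partial>lborel))"

definition H1 :: "(real \<Rightarrow> real) set" where
  "H1 = {u. u \<in> Lp 2 \<and> (\<exists>w. w \<in> Lp 2 \<and> weak_deriv u w)}"

definition tau :: "real \<Rightarrow> real \<Rightarrow> real \<Rightarrow> (real \<Rightarrow> real) \<Rightarrow> (real \<Rightarrow> real) \<Rightarrow> real" where
  "tau a p \<gamma> u v = 2 * a / (p + 2) * (\<integral>x. \<bar>u x\<bar> powr (p + 2) \<partial>lborel)
      + (\<integral>x. v x * (u x)\<^sup>2 \<partial>lborel) + \<gamma> / 4 * (\<integral>x. (v x) ^ 4 \<partial>lborel)"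

text \<open>The constraint set X_{mu,d}; ||u'||_2 is computed with a weak derivative w of u
  (unique a.e., so the value does not depend on the choice).\<close>
definition Xset :: "real \<Rightarrow> real \<Rightarrow> real \<Rightarrow> ((real \<Rightarrow> real) \<times> (real \<Rightarrow> real)) set" where
  "Xset p \<mu> d = {(u, v). u \<in> H1 \<and> u \<in> Lp (p + 2) \<and> v \<in> Lp 2 \<and> v \<in> Lp 4 \<and>
      (\<exists>w. w \<in> Lp 2 \<and> weak_deriv u w \<and> Lnorm2sq u + Lnorm2sq w + d * Lnorm2sq v = \<mu>)}"

definition Imin :: "real \<Rightarrow> real \<Rightarrow> real \<Rightarrow> real \<Rightarrow> real \<Rightarrow> ereal" where
  "Imin a p \<gamma> \<mu> d = (INF uv \<in> Xset p \<mu> d. ereal (tau a p \<gamma> (fst uv) (snd uv)))"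

end

theory Submission
  imports Defs "HOL-Analysis.Analysis" "HOL-Computational_Algebra.Polynomial"
begin


definition Ck :: "nat \<Rightarrow> (real \<Rightarrow> real) \<Rightarrow> bool" where
  "Ck k f \<longleftrightarrow> (\<forall>j\<le>k. \<forall>x. (deriv ^^ j) f differentiable (at x))"

lemma Ck_0: "Ck 0 f \<longleftrightarrow> (\<forall>x. f differentiable (at x))"
  by (simp add: Ck_def)

lemma Ck_Suc: "Ck (Suc k) f \<longleftrightarrow> (\<forall>x. f differentiable (at x)) \<and> Ck k (deriv f)"
proof
  assume H: "Ck (Suc k) f"
  have "(deriv ^^ j) (deriv f) differentiable (at x)" if "j \<le> k" for j x
    using H that unfolding Ck_def by (metis Suc_le_mono funpow_Suc_right o_apply)
  then show "(\<forall>x. f differentiable (at x)) \<and> Ck k (deriv f)"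
    using H unfolding Ck_def by (metis funpow_0 zero_le)
next
  assume H: "(\<forall>x. f differentiable (at x)) \<and> Ck k (deriv f)"
  show "Ck (Suc k) f" unfolding Ck_def
  proof (intro allI impI)
    fix j x assume "j \<le> Suc k"
    then show "(deriv ^^ j) f differentiable (at x)"
      using H unfolding Ck_def
      by (cases j) (auto simp del: funpow.simps simp: funpow_Suc_right)
  qed
qed

lemma Ck_mono: "Ck k f \<Longrightarrow> j \<le> k \<Longrightarrow> Ck j f"
  by (auto simp: Ck_def)

lemma diff_DERIV: "f differentiable (at x) \<Longrightarrow> (f has_real_derivative deriv f x) (at x)"
  by (simp add: DERIV_deriv_iff_real_differentiable)

lemma Ck_const: "Ck k (\<lambda>x. c)"
  by (induction k arbitrary: c) (auto simp: Ck_0 Ck_Suc)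

lemma Ck_add: "Ck k f \<Longrightarrow> Ck k g \<Longrightarrow> Ck k (\<lambda>x. f x + g x)"
proof (induction k arbitrary: f g)
  case 0 then show ?case by (auto simp: Ck_0)
next
  case (Suc k)
  have df: "\<And>x. f differentiable (at x)" and dg: "\<And>x. g differentiable (at x)"
    using Suc.prems by (auto simp: Ck_Suc)
  have "deriv (\<lambda>x. f x + g x) = (\<lambda>x. deriv f x + deriv g x)"
    using df dg by (intro ext DERIV_imp_deriv) (auto intro!: derivative_eq_intros diff_DERIV)
  then show ?case using Suc df dg by (auto simp: Ck_Suc)
qed

lemma Ck_mult: "Ck k f \<Longrightarrow> Ck k g \<Longrightarrow> Ck k (\<lambda>x. f x * g x)"
proof (induction k arbitrary: f g)
  case 0 then show ?case by (auto simp: Ck_0)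
next
  case (Suc k)
  have df: "\<And>x. f differentiable (at x)" and dg: "\<And>x. g differentiable (at x)"
    using Suc.prems by (auto simp: Ck_Suc)
  have e: "deriv (\<lambda>x. f x * g x) = (\<lambda>x. deriv f x * g x + f x * deriv g x)"
    using df dg by (intro ext DERIV_imp_deriv) (auto intro!: derivative_eq_intros diff_DERIV)
  have "Ck k (deriv f)" "Ck k (deriv g)" "Ck k f" "Ck k g"
    using Suc.prems Ck_mono[of "Suc k" f k] Ck_mono[of "Suc k" g k] by (auto simp: Ck_Suc)
  then have "Ck k (\<lambda>x. deriv f x * g x + f x * deriv g x)"
    using Suc.IH by (intro Ck_add) auto
  then show ?case using df dg e by (auto simp: Ck_Suc)
qed

lemma Ck_affine: "Ck k f \<Longrightarrow> Ck k (\<lambda>x. f (a * x + b))"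
proof (induction k arbitrary: f)
  case 0
  then have df: "\<And>x. (f has_real_derivative deriv f x) (at x)" by (auto simp: Ck_0 diff_DERIV)
  then have "\<And>x. ((\<lambda>x. f (a * x + b)) has_real_derivative (a * deriv f (a*x+b))) (at x)"
    proof -
    fix x
    have "((\<lambda>x. a*x+b) has_real_derivative a) (at x)" by (auto intro!: derivative_eq_intros)
    from DERIV_chain2[OF df[of "a*x+b"] this]
    show "((\<lambda>x. f (a * x + b)) has_real_derivative (a * deriv f (a*x+b))) (at x)"
      by (simp add: mult.commute)
  qed
  then show ?case unfolding Ck_0 real_differentiable_def by blast
next
  case (Suc k)
  have df: "\<And>x. (f has_real_derivative deriv f x) (at x)"
    using Suc.prems by (auto simp: Ck_Suc diff_DERIV)
  have d: "\<And>x. ((\<lambda>x. f (a * x + b)) has_real_derivative (a * deriv f (a*x+b))) (at x)"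
    using df proof -
    fix x
    have "((\<lambda>x. a*x+b) has_real_derivative a) (at x)" by (auto intro!: derivative_eq_intros)
    from DERIV_chain2[OF df[of "a*x+b"] this]
    show "((\<lambda>x. f (a * x + b)) has_real_derivative (a * deriv f (a*x+b))) (at x)"
      by (simp add: mult.commute)
  qed
  then have e: "deriv (\<lambda>x. f (a * x + b)) = (\<lambda>x. a * deriv f (a*x+b))"
    by (auto intro!: DERIV_imp_deriv)
  have "Ck k (\<lambda>x. deriv f (a*x+b))" using Suc by (auto simp: Ck_Suc)
  then have "Ck k (\<lambda>x. a * deriv f (a*x+b))" by (intro Ck_mult Ck_const)
  then show ?case using d e by (auto simp: Ck_Suc real_differentiable_def)
qed

definition smooth :: "(real \<Rightarrow> real) \<Rightarrow> bool" where
  "smooth f \<longleftrightarrow> (\<forall>k. Ck k f)"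

lemma smooth_alt: "smooth f \<longleftrightarrow> (\<forall>k x. (deriv ^^ k) f differentiable (at x))"
  by (auto simp: smooth_def Ck_def)

lemma smooth_add: "smooth f \<Longrightarrow> smooth g \<Longrightarrow> smooth (\<lambda>x. f x + g x)"
  and smooth_mult: "smooth f \<Longrightarrow> smooth g \<Longrightarrow> smooth (\<lambda>x. f x * g x)"
  and smooth_affine: "smooth f \<Longrightarrow> smooth (\<lambda>x. f (a * x + b))"
  and smooth_const: "smooth (\<lambda>x. c)"
  by (auto simp: smooth_def Ck_add Ck_mult Ck_affine Ck_const)

lemma smooth_deriv: "smooth f \<longleftrightarrow> (\<forall>x. f differentiable (at x)) \<and> smooth (deriv f)"
  by (metis Ck_Suc Ck_mono le_add2 plus_1_eq_Suc smooth_def)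


lemma lim_poly_exp: "((\<lambda>t::real. t ^ n * poly P t * exp (- t)) \<longlongrightarrow> 0) at_top"
proof (induction P arbitrary: n)
  case 0 then show ?case by simp
next
  case (pCons a P)
  have e: "(\<lambda>t::real. t ^ n * poly (pCons a P) t * exp (- t)) =
        (\<lambda>t. a * (t ^ n / exp t) + t ^ Suc n * poly P t * exp (- t))"
    by (auto simp: exp_minus field_simps)
  have "((\<lambda>t::real. a * (t ^ n / exp t) + t ^ Suc n * poly P t * exp (- t)) \<longlongrightarrow> a * 0 + 0) at_top"
    by (intro tendsto_intros tendsto_power_div_exp_0 pCons.IH)
  then show ?case unfolding e by simp
qed

definition Hp :: "real poly \<Rightarrow> real \<Rightarrow> real" where
  "Hp P x = (if x > 0 then poly P (1/x) * exp (- (1/x)) else 0)"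

definition nxt :: "real poly \<Rightarrow> real poly" where
  "nxt P = [:0,0,1:] * (P - pderiv P)"

lemma Hp_DERIV: "(Hp P has_real_derivative Hp (nxt P) x) (at x)"
proof -
  consider "x > 0" | "x < 0" | "x = 0" by linarith
  then show ?thesis
  proof cases
    case 1
    have d: "((\<lambda>y. poly P (1/y) * exp (- (1/y))) has_real_derivative
       (poly (pderiv P) (1/x) * (- 1 / x^2) * exp (- (1/x)) + poly P (1/x) * (exp (- (1/x)) * (1/x^2)))) (at x)"
    proof -
      have a: "((\<lambda>y. 1/y) has_real_derivative (- 1 / x^2)) (at x)"
        using 1 by (auto intro!: derivative_eq_intros simp: power2_eq_square field_simps)
      have b: "((\<lambda>y. poly P (1/y)) has_real_derivative poly (pderiv P) (1/x) * (- 1 / x^2)) (at x)"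
        using DERIV_chain2[OF poly_DERIV a] .
      have c: "((\<lambda>y. exp (- (1/y))) has_real_derivative exp (- (1/x)) * (1/x^2)) (at x)"
        using 1 by (auto intro!: derivative_eq_intros simp: power2_eq_square field_simps)
      show ?thesis using DERIV_mult[OF b c] by (simp add: mult.commute)
    qed
    have eq: "poly (pderiv P) (1/x) * (- 1 / x^2) * exp (- (1/x)) + poly P (1/x) * (exp (- (1/x)) * (1/x^2))
        = Hp (nxt P) x"
    proof -
      have "poly (nxt P) (1/x) = (1/x^2) * (poly P (1/x) - poly (pderiv P) (1/x))"
        by (simp add: nxt_def power2_eq_square)
      then show ?thesis using 1 by (simp add: Hp_def) (simp add: algebra_simps add_divide_distrib[symmetric])
    qed
    show ?thesis
      apply (rule has_field_derivative_transform_within_open[OF d[unfolded eq], of "{0<..}"])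
      using 1 by (auto simp: Hp_def)
  next
    case 2
    have "((\<lambda>y. 0::real) has_real_derivative Hp (nxt P) x) (at x)" using 2 by (simp add: Hp_def)
    then show ?thesis
      by (rule has_field_derivative_transform_within_open[of _ _ _ "{..<0}"]) (use 2 in \<open>auto simp: Hp_def\<close>)
  next
    case 3
    have "((\<lambda>y. (Hp P y - Hp P 0) / (y - 0)) \<longlongrightarrow> 0) (at 0)"
      unfolding filterlim_at_split
    proof
      show "((\<lambda>y. (Hp P y - Hp P 0) / (y - 0)) \<longlongrightarrow> 0) (at_left 0)"
      proof -
        have "\<forall>\<^sub>F y in at_left 0. (\<lambda>_. 0::real) y = (Hp P y - Hp P 0)/(y-0)"
          by (auto simp: eventually_at_left_field Hp_def intro!: exI[of _ "-1"])
        from tendsto_cong[OF this, of 0] show ?thesis by simp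
      qed
      have l: "((\<lambda>y. (inverse y) ^ 1 * poly P (inverse y) * exp (- (inverse y))) \<longlongrightarrow> 0) (at_right 0)"
        using filterlim_compose[OF lim_poly_exp[of 1 P] filterlim_inverse_at_top_right] by (simp add: o_def)
      show "((\<lambda>y. (Hp P y - Hp P 0) / (y - 0)) \<longlongrightarrow> 0) (at_right 0)"
        apply (rule tendsto_cong[THEN iffD1, OF _ l])
        by (auto simp: eventually_at_right_field Hp_def divide_simps intro: exI[of _ 1])
    qed
    then show ?thesis using 3 by (simp add: has_field_derivative_iff Hp_def)
  qed
qed

lemma deriv_Hp: "deriv (Hp P) = Hp (nxt P)"
  using Hp_DERIV by (auto intro!: DERIV_imp_deriv)

lemma Ck_Hp: "Ck k (Hp P)"
proof (induction k arbitrary: P)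
  case 0 then show ?case using Hp_DERIV by (auto simp: Ck_0 real_differentiable_def)
next
  case (Suc k) then show ?case using Hp_DERIV by (auto simp: Ck_Suc deriv_Hp real_differentiable_def)
qed

lemma smooth_Hp: "smooth (Hp P)"
  by (simp add: smooth_def Ck_Hp)

definition rho0 :: "real \<Rightarrow> real" where
  "rho0 x = Hp 1 x * Hp 1 (1 - x)"

lemma smooth_rho0: "smooth rho0"
proof -
  have "smooth (\<lambda>x. Hp 1 ((-1) * x + 1))" by (rule smooth_affine[OF smooth_Hp])
  moreover have "(\<lambda>x. Hp 1 ((-1) * x + 1)) = (\<lambda>x. Hp 1 (1 - x))" by simp
  ultimately have "smooth (\<lambda>x. Hp 1 (1 - x))" by simp
  then show ?thesis unfolding rho0_def by (intro smooth_mult smooth_Hp)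
qed

lemma rho0_pos: "0 < x \<Longrightarrow> x < 1 \<Longrightarrow> rho0 x > 0"
  by (simp add: rho0_def Hp_def)

lemma rho0_nonneg: "rho0 x \<ge> 0"
  by (simp add: rho0_def Hp_def)

lemma rho0_zero: "x \<le> 0 \<or> x \<ge> 1 \<Longrightarrow> rho0 x = 0"
  by (auto simp: rho0_def Hp_def)


lemma smooth_diffable: "smooth f \<Longrightarrow> f differentiable (at x)"
  using smooth_deriv by blast

lemma smooth_cont: "smooth f \<Longrightarrow> continuous_on UNIV f"
  by (metis continuous_at_imp_continuous_on differentiable_imp_continuous_within smooth_diffable)

lemma smooth_DERIV: "smooth f \<Longrightarrow> (f has_real_derivative deriv f x) (at x)"
  by (simp add: diff_DERIV smooth_diffable)

lemma cont_meas: "continuous_on UNIV f \<Longrightarrow> (f::real\<Rightarrow>real) \<in> borel_measurable lborel"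
  using borel_measurable_continuous_onI by simp

lemma cont_bounded:
  fixes f :: "real \<Rightarrow> real"
  assumes "continuous_on UNIV f" "\<And>x. x < A \<or> x > B \<Longrightarrow> f x = 0"
  shows "\<exists>M. \<forall>x. \<bar>f x\<bar> \<le> M"
proof -
  have "bounded (f ` {A..B})"
    by (intro compact_imp_bounded compact_continuous_image continuous_on_subset[OF assms(1)]) auto
  then obtain M where M: "\<And>y. y \<in> f ` {A..B} \<Longrightarrow> norm y \<le> M" by (auto simp: bounded_iff)
  show ?thesis
  proof (intro exI allI)
    fix x show "\<bar>f x\<bar> \<le> max M 0"
      using M[of "f x"] assms(2)[of x] by (cases "x < A \<or> x > B") auto
  qed
qed

lemma cont_integrable:
  fixes f :: "real \<Rightarrow> real"
  assumes "continuous_on UNIV f" "\<And>x. x < A \<or> x > B \<Longrightarrow> f x = 0"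
  shows "integrable lborel f" and "(\<integral>x. f x \<partial>lborel) = integral {A..B} f"
proof -
  have si: "set_integrable lborel {A..B} f"
    by (rule borel_integrable_atLeastAtMost') (rule continuous_on_subset[OF assms(1)], auto)
  have e: "(\<lambda>x. indicator {A..B} x *\<^sub>R f x) = f"
  proof (rule ext)
    fix x show "indicator {A..B} x *\<^sub>R f x = f x"
      using assms(2)[of x] by (cases "x < A \<or> x > B") (auto simp: indicator_def)
  qed
  show "integrable lborel f" using si unfolding set_integrable_def e .
  show "(\<integral>x. f x \<partial>lborel) = integral {A..B} f"
    using set_borel_integral_eq_integral(2)[OF si] unfolding set_lebesgue_integral_def e .
qed

lemma antideriv_DERIV:
  fixes f :: "real \<Rightarrow> real"
  assumes cont: "continuous_on UNIV f" and z: "\<And>x. x \<le> A \<Longrightarrow> f x = 0"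
  shows "((\<lambda>y. integral {A..y} f) has_real_derivative f x) (at x)"
proof -
  define L where "L = min A x - 1"
  have LA: "L \<le> A" "L < x" by (auto simp: L_def)
  have eq: "integral {L..y} f = integral {A..y} f" for y
  proof (cases "y \<le> A")
    case True
    have "integral {L..y} f = integral {L..y} (\<lambda>_. 0)"
      by (rule integral_cong) (use True z in auto)
    moreover have "integral {A..y} f = 0"
      using True by (cases "y = A") auto
    ultimately show ?thesis by simp
  next
    case False
    have i: "f integrable_on {L..y}"
      by (rule integrable_continuous_interval, rule continuous_on_subset[OF cont]) auto
    have "integral {L..A} f + integral {A..y} f = integral {L..y} f"
      by (rule Henstock_Kurzweil_Integration.integral_combine) (use False LA i in auto)
    moreover have "integral {L..A} f = integral {L..A} (\<lambda>_. 0)"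
      by (rule integral_cong) (use z in auto)
    ultimately show ?thesis by simp
  qed
  have "((\<lambda>y. integral {L..y} f) has_real_derivative f x) (at x within {L..x+1})"
    by (rule integral_has_real_derivative) (use LA continuous_on_subset[OF cont] in auto)
  moreover have "at x within {L..x+1} = at x"
    by (rule at_within_interior) (use LA in auto)
  ultimately show ?thesis using eq by simp
qed

definition tf :: "(real \<Rightarrow> real) \<Rightarrow> real \<Rightarrow> real \<Rightarrow> bool" where
  "tf \<phi> A B \<longleftrightarrow> smooth \<phi> \<and> (\<forall>x. x < A \<or> x > B \<longrightarrow> \<phi> x = 0)"

lemma tf_test_fun: "tf \<phi> A B \<Longrightarrow> test_fun \<phi>"
proof -
  assume h: "tf \<phi> A B"
  have "{x. \<phi> x \<noteq> 0} \<subseteq> {A..B}" using h by (force simp: tf_def)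
  then have "bounded {x. \<phi> x \<noteq> 0}" by (rule bounded_subset[OF bounded_closed_interval])
  then show "test_fun \<phi>" using h by (simp add: test_fun_def tf_def smooth_alt)
qed

lemma cont_zero_closed:
  fixes f :: "real \<Rightarrow> real"
  assumes cont: "continuous_on UNIV f" and z: "\<And>x. x < A \<or> x > B \<Longrightarrow> f x = 0"
  shows "x \<le> A \<or> x \<ge> B \<Longrightarrow> f x = 0"
proof -
  assume x: "x \<le> A \<or> x \<ge> B"
  have ic: "isCont f y" for y using cont by (simp add: continuous_on_eq_continuous_at)
  show ?thesis
  proof (cases "x < A \<or> x > B")
    case True then show ?thesis using z by auto
  next
    case False
    then consider "x = A" | "x = B" using x by force
    then show ?thesis
    proof cases
      case 1
      from ic[of A] have "(f \<longlongrightarrow> f A) (at_left A)" by (simp add: isCont_def filterlim_at_split)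
      moreover have "\<forall>\<^sub>F y in at_left A. f y = 0"
        using z by (auto simp: eventually_at_left_field intro!: exI[of _ "A - 1"])
      then have "(f \<longlongrightarrow> 0) (at_left A)" by (simp add: tendsto_eventually tendsto_cong)
      ultimately have "f A = 0" by (rule tendsto_unique[rotated 1]) simp
      then show ?thesis using 1 by simp
    next
      case 2
      from ic[of B] have "(f \<longlongrightarrow> f B) (at_right B)" by (simp add: isCont_def filterlim_at_split)
      moreover have "\<forall>\<^sub>F y in at_right B. f y = 0"
        using z by (auto simp: eventually_at_right_field intro!: exI[of _ "B + 1"])
      then have "(f \<longlongrightarrow> 0) (at_right B)" by (simp add: tendsto_eventually tendsto_cong)
      ultimately have "f B = 0" by (rule tendsto_unique[rotated 1]) simp
      then show ?thesis using 2 by simp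
    qed
  qed
qed

lemma antideriv_tf:
  fixes f :: "real \<Rightarrow> real"
  assumes "tf f A B" and "(\<integral>x. f x \<partial>lborel) = 0" and AB: "A \<le> B"
  shows "tf (\<lambda>y. integral {A..y} f) A B" and "deriv (\<lambda>y. integral {A..y} f) = f"
proof -
  have cont: "continuous_on UNIV f" using assms smooth_cont by (auto simp: tf_def)
  have z: "x < A \<or> x > B \<Longrightarrow> f x = 0" for x using assms by (auto simp: tf_def)
  have z2: "x \<le> A \<or> x \<ge> B \<Longrightarrow> f x = 0" for x using cont_zero_closed[OF cont z] by blast
  have D: "((\<lambda>y. integral {A..y} f) has_real_derivative f x) (at x)" for x
    by (rule antideriv_DERIV[OF cont]) (use z2 in auto)
  show dd: "deriv (\<lambda>y. integral {A..y} f) = f"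
    using D by (auto intro!: DERIV_imp_deriv)
  have sm: "smooth (\<lambda>y. integral {A..y} f)"
    using D dd assms(1) smooth_deriv[of "(\<lambda>y. integral {A..y} f)"]
    by (auto simp: tf_def real_differentiable_def)
  have "integral {A..y} f = 0" if "y < A \<or> y > B" for y
  proof (cases "y < A")
    case True then show ?thesis by simp
  next
    case False
    then have yB: "y > B" "B \<ge> A" using that AB by auto
    have i: "f integrable_on {A..y}"
      by (rule integrable_continuous_interval, rule continuous_on_subset[OF cont]) auto
    have "integral {A..B} f + integral {B..y} f = integral {A..y} f"
      by (rule Henstock_Kurzweil_Integration.integral_combine) (use yB i in auto)
    moreover have "integral {B..y} f = integral {B..y} (\<lambda>_. 0)"
      by (rule integral_cong) (use z2 in \<open>force\<close>)
    moreover have "integral {A..B} f = 0" using cont_integrable(2)[OF cont z] assms(2) by simp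
    ultimately show ?thesis by simp
  qed
  then show "tf (\<lambda>y. integral {A..y} f) A B" using sm by (simp add: tf_def)
qed


lemma tf_mono: "tf ch A B \<Longrightarrow> A' \<le> A \<Longrightarrow> B \<le> B' \<Longrightarrow> tf ch A' B'"
  by (auto simp: tf_def)

lemma tf_rho0: "tf rho0 0 1"
  using smooth_rho0 rho0_zero by (auto simp: tf_def)

lemma tf_integrable: "tf ch A B \<Longrightarrow> integrable lborel ch"
  using cont_integrable(1)[of ch A B] smooth_cont by (auto simp: tf_def)

lemma tf_lint: "tf ch A B \<Longrightarrow> (\<integral>x. ch x \<partial>lborel) = integral {A..B} ch"
  using cont_integrable(2)[of ch A B] smooth_cont by (auto simp: tf_def)

lemma int_g_tf:
  fixes g :: "real \<Rightarrow> real"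
  assumes gm: "g \<in> borel_measurable lborel" and gi: "\<And>a b. set_integrable lborel {a..b} g"
    and t: "tf ch A B"
  shows "integrable lborel (\<lambda>x. g x * ch x)"
proof -
  have cont: "continuous_on UNIV ch" and z: "\<And>x. x < A \<or> x > B \<Longrightarrow> ch x = 0"
    using t smooth_cont by (auto simp: tf_def)
  obtain M where M: "\<And>x. \<bar>ch x\<bar> \<le> M" using cont_bounded[OF cont z] by blast
  have i: "integrable lborel (\<lambda>x. M * (indicator {A..B} x *\<^sub>R g x))"
    using gi[of A B] unfolding set_integrable_def by simp
  show ?thesis
  proof (rule Bochner_Integration.integrable_bound[OF i])
    show "(\<lambda>x. g x * ch x) \<in> borel_measurable lborel" using gm cont_meas[OF cont] by measurable
    show "AE x in lborel. norm (g x * ch x) \<le> norm (M * (indicator {A..B} x *\<^sub>R g x))"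
    proof (rule AE_I2)
      fix x
      show "norm (g x * ch x) \<le> norm (M * (indicator {A..B} x *\<^sub>R g x))"
      proof (cases "x < A \<or> x > B")
        case True then show ?thesis using z by simp
      next
        case False
        then have "indicator {A..B} x = (1::real)" by (auto simp: indicator_def)
        moreover have "\<bar>g x\<bar> * \<bar>ch x\<bar> \<le> \<bar>g x\<bar> * M" using M by (simp add: mult_left_mono)
        moreover have "0 \<le> M" using M[of x] by simp
        ultimately show ?thesis by (simp add: abs_mult mult.commute)
      qed
    qed
  qed
qed

definition K0 :: real where "K0 = (\<integral>x. rho0 x \<partial>lborel)"

lemma K0_pos: "K0 > 0"
proof -
  have c: "continuous_on {0..1} rho0" using smooth_cont[OF smooth_rho0] continuous_on_subset by blast
  have e: "K0 = integral {0..1} rho0" using tf_lint[OF tf_rho0] by (simp add: K0_def)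
  have "integral {0..1} rho0 \<ge> 0"
    by (rule integral_nonneg) (use c integrable_continuous_interval rho0_nonneg in auto)
  moreover have "integral {0..1} rho0 \<noteq> 0"
    using integral_eq_0_iff[OF c, of] rho0_nonneg rho0_pos[of "1/2"] by force
  ultimately show ?thesis using e by simp
qed


lemma mean_lemma:
  fixes g :: "real \<Rightarrow> real"
  assumes gm: "g \<in> borel_measurable lborel" and gi: "\<And>a b. set_integrable lborel {a..b} g"
    and H: "\<And>\<phi>. test_fun \<phi> \<Longrightarrow> (\<integral>x. g x * deriv \<phi> x \<partial>lborel) = 0"
    and t: "tf ch A B"
  shows "(\<integral>x. g x * ch x \<partial>lborel) = ((\<integral>x. g x * rho0 x \<partial>lborel) / K0) * (\<integral>x. ch x \<partial>lborel)"
proof -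
  define A' where "A' = min A 0"
  define B' where "B' = max B 1"
  have AB: "A' \<le> B'" by (auto simp: A'_def B'_def)
  have t1: "tf ch A' B'" by (rule tf_mono[OF t]) (auto simp: A'_def B'_def)
  have t2: "tf rho0 A' B'" by (rule tf_mono[OF tf_rho0]) (auto simp: A'_def B'_def)
  define K where "K = (\<integral>x. ch x \<partial>lborel)"
  define f where "f = (\<lambda>x. ch x + (- (K / K0)) * rho0 x)"
  have "smooth ch" "smooth rho0" using t1 t2 by (auto simp: tf_def)
  then have "smooth f" unfolding f_def by (intro smooth_add smooth_mult smooth_const)
  then have tfF: "tf f A' B'"
    using t1 t2 unfolding tf_def by (auto simp: f_def)
  have "(\<integral>x. f x \<partial>lborel) = K + (- (K / K0)) * K0"
    unfolding f_def K_def K0_def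
    by (subst Bochner_Integration.integral_add) (use tf_integrable[OF t1] tf_integrable[OF t2] in auto)
  then have i0: "(\<integral>x. f x \<partial>lborel) = 0" using K0_pos by simp
  define F where "F = (\<lambda>y. integral {A'..y} f)"
  have tF: "tf F A' B'" and dF: "deriv F = f"
    using antideriv_tf[OF tfF i0 AB] by (auto simp: F_def)
  have "0 = (\<integral>x. g x * f x \<partial>lborel)"
    using H[OF tf_test_fun[OF tF]] dF by simp
  also have "\<dots> = (\<integral>x. g x * ch x + (- (K / K0)) * (g x * rho0 x) \<partial>lborel)"
    by (simp add: f_def algebra_simps)
  also have "\<dots> = (\<integral>x. g x * ch x \<partial>lborel) + (- (K / K0)) * (\<integral>x. g x * rho0 x \<partial>lborel)"
    by (subst Bochner_Integration.integral_add) (use int_g_tf[OF gm gi t1] int_g_tf[OF gm gi t2] in auto)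
  finally show ?thesis unfolding K_def by simp
qed

definition Sf :: "real \<Rightarrow> real" where "Sf x = integral {0..x} rho0 / K0"

lemma Sf_props: "smooth Sf" "x \<le> 0 \<Longrightarrow> Sf x = 0" "x \<ge> 1 \<Longrightarrow> Sf x = 1" "0 \<le> Sf x" "Sf x \<le> 1"
proof -
  have cont: "continuous_on UNIV rho0" using smooth_cont[OF smooth_rho0] .
  have D: "(Sf has_real_derivative rho0 y * (1 / K0)) (at y)" for y
    unfolding Sf_def using antideriv_DERIV[OF cont, of 0 y] rho0_zero
    by (auto intro!: derivative_eq_intros simp: divide_inverse)
  have "deriv Sf = (\<lambda>y. rho0 y * (1 / K0))" using D by (auto intro!: DERIV_imp_deriv)
  moreover have "smooth (\<lambda>y. rho0 y * (1 / K0))" by (intro smooth_mult smooth_rho0 smooth_const)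
  ultimately show "smooth Sf" using D smooth_deriv[of Sf] by (auto simp: real_differentiable_def)
  show "x \<le> 0 \<Longrightarrow> Sf x = 0" by (cases "x = 0") (auto simp: Sf_def)
  have K0e: "K0 = integral {0..1} rho0" using tf_lint[OF tf_rho0] by (simp add: K0_def)
  have ii: "rho0 integrable_on {a..b}" for a b
    by (rule integrable_continuous_interval, rule continuous_on_subset[OF cont]) auto
  show S1: "x \<ge> 1 \<Longrightarrow> Sf x = 1"
  proof -
    assume x: "x \<ge> 1"
    have "integral {0..1} rho0 + integral {1..x} rho0 = integral {0..x} rho0"
      by (rule Henstock_Kurzweil_Integration.integral_combine) (use x ii in auto)
    moreover have "integral {1..x} rho0 = integral {1..x} (\<lambda>_. 0)"
      by (rule integral_cong) (use rho0_zero in auto)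
    ultimately show ?thesis using K0e K0_pos by (simp add: Sf_def)
  qed
  show "0 \<le> Sf x"
    unfolding Sf_def using K0_pos by (intro divide_nonneg_pos integral_nonneg ii rho0_nonneg) auto
  show "Sf x \<le> 1"
  proof (cases "x \<ge> 1")
    case True then show ?thesis using S1 by simp
  next
    case False
    have "integral {0..x} rho0 \<le> integral {0..1} rho0"
      by (rule integral_subset_le) (use False ii rho0_nonneg in auto)
    then show ?thesis using K0e K0_pos by (simp add: Sf_def)
  qed
qed


lemma nn_fin: "integrable lborel (f::real\<Rightarrow>real) \<Longrightarrow> (\<integral>\<^sup>+x. ennreal (f x) \<partial>lborel) < \<infinity>"
proof -
  assume i: "integrable lborel f"
  have "(\<integral>\<^sup>+x. ennreal (f x) \<partial>lborel) \<le> (\<integral>\<^sup>+x. ennreal (norm (f x)) \<partial>lborel)"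
    by (rule nn_integral_mono) (simp add: ennreal_leI)
  also have "\<dots> < \<infinity>" using i unfolding integrable_iff_bounded by simp
  finally show ?thesis .
qed

lemma ae_zero_from_rays:
  fixes h :: "real \<Rightarrow> real"
  assumes i: "integrable lborel h" and z: "\<And>y. (\<integral>x. indicator {y<..} x * h x \<partial>lborel) = 0"
  shows "AE x in lborel. h x = 0"
proof -
  have hm: "h \<in> borel_measurable lborel" using i by simp
  define M1 where "M1 = density lborel (\<lambda>x. ennreal (h x))"
  define M2 where "M2 = density lborel (\<lambda>x. ennreal (- h x))"
  have em1: "emeasure M1 {y<..} = (\<integral>\<^sup>+x. ennreal (indicator {y<..} x * h x) \<partial>lborel)" for y
    unfolding M1_def using hm
    by (subst emeasure_density) (auto intro!: nn_integral_cong simp: indicator_def)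
  have em2: "emeasure M2 {y<..} = (\<integral>\<^sup>+x. ennreal (- (indicator {y<..} x * h x)) \<partial>lborel)" for y
    unfolding M2_def using hm
    by (subst emeasure_density) (auto intro!: nn_integral_cong simp: indicator_def)
  have iy: "integrable lborel (\<lambda>x. indicator {y<..} x * h x)" for y
    using integrable_mult_indicator[OF _ i, of "{y<..}"] by simp
  have eq: "emeasure M1 {y<..} = emeasure M2 {y<..}" for y
  proof -
    have f1: "emeasure M1 {y<..} < \<infinity>" using nn_fin[OF iy] em1 by simp
    have f2: "emeasure M2 {y<..} < \<infinity>" using nn_fin[OF integrable_minus[OF iy]] em2 by simp
    have "enn2real (emeasure M1 {y<..}) - enn2real (emeasure M2 {y<..}) = 0"
      using real_lebesgue_integral_def[OF iy[of y]] z[of y] em1 em2 by simp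
    then have "enn2real (emeasure M1 {y<..}) = enn2real (emeasure M2 {y<..})" by simp
    then have "ennreal (enn2real (emeasure M1 {y<..})) = ennreal (enn2real (emeasure M2 {y<..}))" by simp
    then show ?thesis using ennreal_enn2real[OF f1[unfolded infinity_ennreal_def]]
        ennreal_enn2real[OF f2[unfolded infinity_ennreal_def]] by simp
  qed
  have "M1 = M2"
  proof (rule measure_eqI_lessThan)
    show "sets M1 = sets borel" "sets M2 = sets borel" by (simp_all add: M1_def M2_def)
    show "emeasure M1 {x<..} < \<infinity>" for x using nn_fin[OF iy] em1 by simp
    show "emeasure M1 {x<..} = emeasure M2 {x<..}" for x by (rule eq)
  qed
  then have "AE x in lborel. ennreal (h x) = ennreal (- h x)"
    unfolding M1_def M2_def
    by (intro sigma_finite_measure.density_unique[OF sigma_finite_lborel]) (use hm in auto)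
  then show ?thesis
  proof (rule eventually_mono)
    fix x assume "ennreal (h x) = ennreal (- h x)"
    note e = this
    have "h x \<le> 0"
    proof (cases "h x \<ge> 0")
      case True
      then have z: "ennreal (- h x) = 0" by (simp add: ennreal_eq_0_iff)
      have "ennreal (h x) = 0" using e z by (rule trans)
      then show ?thesis by (simp only: ennreal_eq_0_iff)
    qed simp
    moreover have "h x \<ge> 0"
    proof (cases "h x \<le> 0")
      case True
      then have z: "ennreal (h x) = 0" by (simp add: ennreal_eq_0_iff)
      have "ennreal (- h x) = 0" using e z by simp
      then show ?thesis by (simp only: ennreal_eq_0_iff)
    qed simp
    ultimately show "h x = 0" by simp
  qed
qed


definition chi :: "real \<Rightarrow> real \<Rightarrow> nat \<Rightarrow> real \<Rightarrow> real" where
  "chi a b n x = Sf (real (Suc n) * x + (- real (Suc n) * a)) * Sf ((- real (Suc n)) * x + real (Suc n) * b)"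

lemma chi_tf: "tf (chi a b n) a b"
proof -
  have "smooth (chi a b n)" unfolding chi_def
    by (intro smooth_mult smooth_affine Sf_props(1))
  moreover have "chi a b n x = 0" if "x < a \<or> x > b" for x
  proof -
    have "real (Suc n) * x + (- real (Suc n) * a) = real (Suc n) * (x - a)"
      "(- real (Suc n)) * x + real (Suc n) * b = real (Suc n) * (b - x)" by (simp_all add: algebra_simps)
    moreover have "x < a \<Longrightarrow> real (Suc n) * (x - a) \<le> 0" "x > b \<Longrightarrow> real (Suc n) * (b - x) \<le> 0"
      by (simp_all add: mult_nonneg_nonpos)
    ultimately show ?thesis using that Sf_props(2) unfolding chi_def by auto
  qed
  ultimately show ?thesis by (auto simp: tf_def)
qed

lemma chi_bound: "\<bar>chi a b n x\<bar> \<le> 1"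
  unfolding chi_def using Sf_props(4,5)
  by (simp add: abs_mult mult_le_one)

lemma chi_lim: "(\<lambda>n. chi a b n x) \<longlonglongrightarrow> indicator {a<..<b} x"
proof -
  have e1: "real (Suc n) * x + (- real (Suc n) * a) = real (Suc n) * (x - a)"
     and e2: "(- real (Suc n)) * x + real (Suc n) * b = real (Suc n) * (b - x)" for n
    by (simp_all add: algebra_simps)
  consider "x \<le> a" | "x \<ge> b" | "a < x \<and> x < b" by linarith
  then show ?thesis
  proof cases
    case 1
    then have "chi a b n x = 0" for n
      unfolding chi_def e1 by (simp add: Sf_props(2) mult_nonneg_nonpos)
    then show ?thesis using 1 by (simp add: indicator_def)
  next
    case 2
    then have "chi a b n x = 0" for n
      unfolding chi_def e2 by (simp add: Sf_props(2) mult_nonneg_nonpos)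
    then show ?thesis using 2 by (simp add: indicator_def)
  next
    case 3
    define e where "e = min (x - a) (b - x)"
    have e0: "e > 0" using 3 by (simp add: e_def)
    obtain N where N: "1 / e < real N" using reals_Archimedean2 by blast
    have "chi a b n x = 1" if "n \<ge> N" for n
    proof -
      have "1 < real N * e" using N e0 by (simp add: field_simps)
      also have "\<dots> \<le> real (Suc n) * e" using that e0 by (intro mult_right_mono) auto
      finally have "1 \<le> real (Suc n) * (x - a)" "1 \<le> real (Suc n) * (b - x)"
        using e0 by (smt (verit, best) e_def min.cobounded1 min.cobounded2 mult_left_mono of_nat_0_le_iff)+
      then show ?thesis unfolding chi_def e1 e2 by (simp add: Sf_props(3))
    qed
    then have "\<forall>\<^sub>F n in sequentially. chi a b n x = 1" by (auto simp: eventually_sequentially)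
    then have "(\<lambda>n. chi a b n x) \<longlonglongrightarrow> 1" by (rule tendsto_eventually)
    then show ?thesis using 3 by (simp add: indicator_def)
  qed
qed

lemma interval_mean:
  fixes g :: "real \<Rightarrow> real"
  assumes gm: "g \<in> borel_measurable lborel" and gi: "\<And>a b. set_integrable lborel {a..b} g"
    and H: "\<And>\<phi>. test_fun \<phi> \<Longrightarrow> (\<integral>x. g x * deriv \<phi> x \<partial>lborel) = 0"
    and ab: "a < b"
  shows "(\<integral>x. indicator {a<..<b} x * g x \<partial>lborel) = ((\<integral>x. g x * rho0 x \<partial>lborel) / K0) * (b - a)"
proof -
  define cc where "cc = (\<integral>x. g x * rho0 x \<partial>lborel) / K0"
  have mean: "(\<integral>x. g x * chi a b n x \<partial>lborel) = cc * (\<integral>x. chi a b n x \<partial>lborel)" for n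
    using mean_lemma[OF gm gi H chi_tf] by (simp add: cc_def)
  have chim: "chi a b n \<in> borel_measurable lborel" for n
    using chi_tf[of a b n] cont_meas smooth_cont by (auto simp: tf_def)
  have l1: "(\<lambda>n. \<integral>x. g x * chi a b n x \<partial>lborel) \<longlonglongrightarrow> (\<integral>x. indicator {a<..<b} x * g x \<partial>lborel)"
  proof (rule integral_dominated_convergence[where w = "\<lambda>x. \<bar>indicator {a..b} x *\<^sub>R g x\<bar>"])
    show "(\<lambda>x. indicator {a<..<b} x * g x) \<in> borel_measurable lborel" using gm by measurable
    show "(\<lambda>x. g x * chi a b n x) \<in> borel_measurable lborel" for n using gm chim by measurable
    show "integrable lborel (\<lambda>x. \<bar>indicator {a..b} x *\<^sub>R g x\<bar>)"
      using gi[of a b] unfolding set_integrable_def by (rule integrable_abs)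
    show "AE x in lborel. (\<lambda>n. g x * chi a b n x) \<longlonglongrightarrow> indicator {a<..<b} x * g x"
    proof (rule AE_I2)
      fix x show "(\<lambda>n. g x * chi a b n x) \<longlonglongrightarrow> indicator {a<..<b} x * g x"
        using tendsto_mult_left[OF chi_lim[of a b x], of "g x"] by (simp add: mult.commute)
    qed
    show "AE x in lborel. norm (g x * chi a b n x) \<le> \<bar>indicator {a..b} x *\<^sub>R g x\<bar>" for n
    proof (rule AE_I2)
      fix x
      show "norm (g x * chi a b n x) \<le> \<bar>indicator {a..b} x *\<^sub>R g x\<bar>"
      proof (cases "x < a \<or> x > b")
        case True then have "chi a b n x = 0" using chi_tf[of a b n] by (auto simp: tf_def)
        then show ?thesis by simp
      next
        case False
        then show ?thesis using chi_bound[of a b n x]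
          by (auto simp: indicator_def abs_mult intro: mult_left_le)
      qed
    qed
  qed
  have l2: "(\<lambda>n. \<integral>x. chi a b n x \<partial>lborel) \<longlonglongrightarrow> (\<integral>x. indicator {a<..<b} x \<partial>lborel)"
  proof (rule integral_dominated_convergence[where w = "\<lambda>x. indicator {a..b} x *\<^sub>R (1::real)"])
    show "(\<lambda>x. indicator {a<..<b} x :: real) \<in> borel_measurable lborel" by measurable
    show "chi a b n \<in> borel_measurable lborel" for n by (rule chim)
    show "integrable lborel (\<lambda>x. indicator {a..b} x *\<^sub>R (1::real))"
      using borel_integrable_atLeastAtMost'[of a b "\<lambda>_. 1::real"] unfolding set_integrable_def by simp
    show "AE x in lborel. (\<lambda>n. chi a b n x) \<longlonglongrightarrow> indicator {a<..<b} x"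
      by (rule AE_I2) (rule chi_lim)
    show "AE x in lborel. norm (chi a b n x) \<le> indicator {a..b} x *\<^sub>R (1::real)" for n
    proof (rule AE_I2)
      fix x
      show "norm (chi a b n x) \<le> indicator {a..b} x *\<^sub>R (1::real)"
      proof (cases "x < a \<or> x > b")
        case True then have "chi a b n x = 0" using chi_tf[of a b n] by (auto simp: tf_def)
        then show ?thesis by simp
      next
        case False
        then show ?thesis using chi_bound[of a b n x] by (auto simp: indicator_def)
      qed
    qed
  qed
  have m: "(\<integral>x. indicator {a<..<b} x \<partial>lborel) = b - a"
    using ab by (simp add: measure_lborel_Ioo)
  have "(\<lambda>n. cc * (\<integral>x. chi a b n x \<partial>lborel)) \<longlonglongrightarrow> cc * (b - a)"
    using tendsto_mult_left[OF l2] m by simp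
  then have "(\<lambda>n. \<integral>x. g x * chi a b n x \<partial>lborel) \<longlonglongrightarrow> cc * (b - a)" using mean by simp
  from LIMSEQ_unique[OF l1 this] show ?thesis by (simp add: cc_def)
qed

lemma ae_const:
  fixes g :: "real \<Rightarrow> real"
  assumes gm: "g \<in> borel_measurable lborel" and gi: "\<And>a b. set_integrable lborel {a..b} g"
    and H: "\<And>\<phi>. test_fun \<phi> \<Longrightarrow> (\<integral>x. g x * deriv \<phi> x \<partial>lborel) = 0"
  shows "\<exists>c. AE x in lborel. g x = c"
proof -
  define cc where "cc = (\<integral>x. g x * rho0 x \<partial>lborel) / K0"
  have iv: "(\<integral>x. indicator {a<..<b} x * (g x - cc) \<partial>lborel) = 0" if "a < b" for a b
  proof -
    have i1: "integrable lborel (\<lambda>x. indicator {a<..<b} x * g x)"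
    proof -
      have "integrable lborel (\<lambda>x. indicator {a<..<b} x *\<^sub>R (indicator {a..b} x *\<^sub>R g x))"
        using integrable_mult_indicator[OF _ gi[of a b, unfolded set_integrable_def], of "{a<..<b}"] by simp
      moreover have "(\<lambda>x. indicator {a<..<b} x *\<^sub>R (indicator {a..b} x *\<^sub>R g x)) = (\<lambda>x. indicator {a<..<b} x * g x)"
        by (auto simp: indicator_def)
      ultimately show ?thesis by simp
    qed
    have i2: "integrable lborel (\<lambda>x. indicator {a<..<b} x * cc :: real)"
      using that by (intro integrable_mult_left) (simp add: emeasure_lborel_Ioo)
    have "(\<integral>x. indicator {a<..<b} x * (g x - cc) \<partial>lborel)
       = (\<integral>x. indicator {a<..<b} x * g x \<partial>lborel) - (\<integral>x. indicator {a<..<b} x * cc \<partial>lborel)"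
      by (subst Bochner_Integration.integral_diff[symmetric]) (use i1 i2 in \<open>auto simp: algebra_simps\<close>)
    also have "\<dots> = cc * (b - a) - (b - a) * cc"
      using interval_mean[OF gm gi H that] that by (simp add: cc_def measure_lborel_Ioo)
    finally show ?thesis by simp
  qed
  have nfacts: "AE x in lborel. indicator {- real n<..<real n} x * (g x - cc) = 0" for n
  proof (rule ae_zero_from_rays)
    show "integrable lborel (\<lambda>x. indicator {- real n<..<real n} x * (g x - cc))"
    proof -
      have "integrable lborel (\<lambda>x. indicator {- real n<..<real n} x *\<^sub>R (indicator {- real n..real n} x *\<^sub>R (g x - cc)))"
      proof -
        have "integrable lborel (\<lambda>x. indicator {- real n..real n} x *\<^sub>R g x - indicator {- real n..real n} x *\<^sub>R cc)"
          using borel_integrable_atLeastAtMost'[of "- real n" "real n" "\<lambda>_. cc"] gi[of "- real n" "real n"]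
          unfolding set_integrable_def by (intro Bochner_Integration.integrable_diff) (auto intro: continuous_on_const)
        then have "integrable lborel (\<lambda>x. indicator {- real n..real n} x *\<^sub>R (g x - cc))"
          by (simp add: algebra_simps)
        from integrable_mult_indicator[OF _ this, of "{- real n<..<real n}"] show ?thesis by simp
      qed
      moreover have "(\<lambda>x. indicator {- real n<..<real n} x *\<^sub>R (indicator {- real n..real n} x *\<^sub>R (g x - cc))) = (\<lambda>x. indicator {- real n<..<real n} x * (g x - cc))"
        by (auto simp: indicator_def)
      ultimately show ?thesis by simp
    qed
    fix y
    show "(\<integral>x. indicator {y<..} x * (indicator {- real n<..<real n} x * (g x - cc)) \<partial>lborel) = 0"
    proof (cases "max y (- real n) < real n")
      case True
      have "(\<lambda>x. indicator {y<..} x * (indicator {- real n<..<real n} x * (g x - cc)))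
          = (\<lambda>x. indicator {max y (- real n)<..<real n} x * (g x - cc))"
        by (auto simp: indicator_def)
      then show ?thesis using iv[OF True] by simp
    next
      case False
      then have "(\<lambda>x. indicator {y<..} x * (indicator {- real n<..<real n} x * (g x - cc))) = (\<lambda>x. 0::real)"
        by (auto simp: indicator_def)
      then show ?thesis by simp
    qed
  qed
  have "AE x in lborel. \<forall>n. indicator {- real n<..<real n} x * (g x - cc) = 0"
    unfolding AE_all_countable using nfacts by blast
  then have "AE x in lborel. g x = cc"
  proof (rule eventually_mono)
    fix x assume h: "\<forall>n. indicator {- real n<..<real n} x * (g x - cc) = (0::real)"
    obtain n where "\<bar>x\<bar> < real n" using reals_Archimedean2 by blast
    then have "indicator {- real n<..<real n} x = (1::real)" by (auto simp: indicator_def)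
    then show "g x = cc" using h[rule_format, of n] by simp
  qed
  then show ?thesis by blast
qed


lemma tf_deriv: assumes "tf \<phi> A B" shows "tf (deriv \<phi>) A B"
proof -
  have sm: "smooth \<phi>" and z: "\<And>x. x < A \<or> x > B \<Longrightarrow> \<phi> x = 0" using assms by (auto simp: tf_def)
  have "deriv \<phi> x = 0" if "x < A \<or> x > B" for x
  proof -
    have "((\<lambda>_. 0::real) has_real_derivative 0) (at x)" by simp
    then have "(\<phi> has_real_derivative 0) (at x)"
    proof (rule has_field_derivative_transform_within_open[of _ _ _ "if x < A then {..<A} else {B<..}"])
      show "open (if x < A then {..<A} else {B<..})" by auto
      show "x \<in> (if x < A then {..<A} else {B<..})" using that by auto
      show "\<And>y. y \<in> (if x < A then {..<A} else {B<..}) \<Longrightarrow> 0 = \<phi> y"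
        using z that by (auto split: if_splits)
    qed
    then show ?thesis by (rule DERIV_imp_deriv)
  qed
  moreover have "smooth (deriv \<phi>)" using sm smooth_deriv by blast
  ultimately show ?thesis by (auto simp: tf_def)
qed

lemma FTC_tf:
  assumes t: "tf \<phi> A B" and ab: "a \<le> b"
  shows "(\<integral>x. indicator {a<..<b} x * deriv \<phi> x \<partial>lborel) = \<phi> b - \<phi> a"
proof -
  have sm: "smooth \<phi>" using t by (auto simp: tf_def)
  have c: "continuous_on UNIV (deriv \<phi>)" using sm smooth_deriv smooth_cont by blast
  have "interval_lebesgue_integral lborel (ereal a) (ereal b) (deriv \<phi>) = \<phi> b - \<phi> a"
  proof (rule interval_integral_FTC_finite)
    show "continuous_on {min a b..max a b} (deriv \<phi>)" using c continuous_on_subset by blast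
    fix x
    show "(\<phi> has_vector_derivative deriv \<phi> x) (at x within {min a b..max a b})"
      using smooth_DERIV[OF sm, of x]
      by (simp add: has_real_derivative_iff_has_vector_derivative has_vector_derivative_at_within)
  qed
  moreover have "interval_lebesgue_integral lborel (ereal a) (ereal b) (deriv \<phi>)
      = (\<integral>x. indicator {a<..<b} x * deriv \<phi> x \<partial>lborel)"
  proof -
    have "{x. a < x \<and> x < b} = {a<..<b}" by auto
    then show ?thesis
      using ab by (simp add: interval_lebesgue_integral_def set_lebesgue_integral_def einterval_def)
  qed
  ultimately show ?thesis by simp
qed

definition Kf :: "real \<Rightarrow> real \<Rightarrow> real" where
  "Kf x t = indicator {0<..<x} t - indicator {x<..<0} t"

lemma Kf_meas: "(\<lambda>(x, t). Kf x t) \<in> borel_measurable (lborel \<Otimes>\<^sub>M lborel)"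
proof -
  have "(\<lambda>(x, t). Kf x t) = (\<lambda>p. (if 0 < snd p \<and> snd p < fst p then 1 else 0) - (if fst p < snd p \<and> snd p < 0 then 1 else (0::real)))"
    by (auto simp: Kf_def indicator_def)
  also have "\<dots> \<in> borel_measurable (lborel \<Otimes>\<^sub>M lborel)" by measurable
  finally show ?thesis .
qed

lemma Kf_meas1: "(\<lambda>x. Kf x t) \<in> borel_measurable lborel"
proof -
  have "(\<lambda>x. Kf x t) = (\<lambda>x. (if 0 < t \<and> t < x then 1 else 0) - (if x < t \<and> t < 0 then 1 else (0::real)))"
    by (auto simp: Kf_def indicator_def)
  also have "\<dots> \<in> borel_measurable lborel" by measurable
  finally show ?thesis .
qed

lemma Kf_bound: "\<bar>Kf x t\<bar> \<le> indicator {-\<bar>x\<bar>..\<bar>x\<bar>} t"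
  by (auto simp: Kf_def indicator_def)

lemma Kf_diff: "x \<le> y \<Longrightarrow> \<bar>Kf y t - Kf x t\<bar> \<le> indicator {x..y} t"
  by (auto simp: Kf_def indicator_def)

lemma deriv_Kf:
  assumes t: "tf \<phi> A B" and t0: "t \<noteq> 0"
  shows "(\<integral>x. deriv \<phi> x * Kf x t \<partial>lborel) = - \<phi> t"
proof -
  have td: "tf (deriv \<phi>) A B" by (rule tf_deriv[OF t])
  have z: "\<And>x. x < A \<or> x > B \<Longrightarrow> \<phi> x = 0" using t by (auto simp: tf_def)
  have zd: "\<And>x. x < A \<or> x > B \<Longrightarrow> deriv \<phi> x = 0" using td by (auto simp: tf_def)
  show ?thesis
  proof (cases "t > 0")
    case True
    define T where "T = max B t + 1"
    have "(\<lambda>x. deriv \<phi> x * Kf x t) = (\<lambda>x. indicator {t<..<T} x * deriv \<phi> x)"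
    proof (rule ext)
      fix x show "deriv \<phi> x * Kf x t = indicator {t<..<T} x * deriv \<phi> x"
        using True zd[of x] by (auto simp: Kf_def indicator_def T_def max_def split: if_splits)
    qed
    moreover have "\<phi> T = 0" using z[of T] by (simp add: T_def max_def)
    ultimately show ?thesis using FTC_tf[OF t, of t T] by (simp add: T_def)
  next
    case False
    then have tn: "t < 0" using t0 by simp
    define L where "L = min A t - 1"
    have "(\<integral>x. deriv \<phi> x * Kf x t \<partial>lborel) = (\<integral>x. - (indicator {L<..<t} x * deriv \<phi> x) \<partial>lborel)"
    proof (rule integral_cong_AE)
      show "(\<lambda>x. deriv \<phi> x * Kf x t) \<in> borel_measurable lborel"
      proof -
        have "deriv \<phi> \<in> borel_measurable lborel" using td cont_meas smooth_cont unfolding tf_def by blast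
        then show ?thesis using Kf_meas1[of t] by measurable
      qed
      show "(\<lambda>x. - (indicator {L<..<t} x * deriv \<phi> x)) \<in> borel_measurable lborel"
      proof -
        have "deriv \<phi> \<in> borel_measurable lborel" using td cont_meas smooth_cont unfolding tf_def by blast
        then show ?thesis by measurable
      qed
      show "AE x in lborel. deriv \<phi> x * Kf x t = - (indicator {L<..<t} x * deriv \<phi> x)"
        using AE_lborel_singleton[of t]
      proof (rule eventually_mono)
        fix x assume "x \<noteq> t"
        then show "deriv \<phi> x * Kf x t = - (indicator {L<..<t} x * deriv \<phi> x)"
          using tn zd[of x] by (auto simp: Kf_def indicator_def L_def min_def split: if_splits)
      qed
    qed
    also have "\<dots> = - (\<phi> t - \<phi> L)" using FTC_tf[OF t, of L t] by (simp add: L_def)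
    also have "\<phi> L = 0" using z[of L] by (simp add: L_def min_def)
    finally show ?thesis by simp
  qed
qed


lemma Lp2_sq:
  assumes "f \<in> Lp 2"
  shows "f \<in> borel_measurable lborel" "integrable lborel (\<lambda>x. (f x)\<^sup>2)"
proof -
  have e: "\<bar>y\<bar> powr 2 = y\<^sup>2" for y :: real
    by (simp add: powr_numeral)
  show "f \<in> borel_measurable lborel" "integrable lborel (\<lambda>x. (f x)\<^sup>2)"
    using assms unfolding Lp_def e by auto
qed

lemma abs_le_sq: "\<bar>y::real\<bar> \<le> (1 + y\<^sup>2) / 2"
proof -
  have "0 \<le> (\<bar>y\<bar> - 1)\<^sup>2" by simp
  then show ?thesis by (simp add: power2_eq_square algebra_simps abs_mult_self_eq)
qed

lemma ind_int: "integrable lborel (\<lambda>x. indicator {a..b::real} x :: real)"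
  using borel_integrable_atLeastAtMost'[of a b "\<lambda>_. 1::real"] unfolding set_integrable_def by simp

lemma ind_L2_int:
  fixes f :: "real \<Rightarrow> real"
  assumes fm: "f \<in> borel_measurable lborel" and fi: "integrable lborel (\<lambda>x. (f x)\<^sup>2)"
  shows "integrable lborel (\<lambda>x. indicator {a..b} x * f x)"
proof (rule Bochner_Integration.integrable_bound)
  show "integrable lborel (\<lambda>x. indicator {a..b} x + (f x)\<^sup>2)"
    using ind_int fi by (rule Bochner_Integration.integrable_add)
  show "(\<lambda>x. indicator {a..b} x * f x) \<in> borel_measurable lborel" using fm by measurable
  show "AE x in lborel. norm (indicator {a..b} x * f x) \<le> norm (indicator {a..b} x + (f x)\<^sup>2)"
  proof (rule AE_I2)
    fix x
    have "\<bar>f x\<bar> \<le> 1 + (f x)\<^sup>2" using abs_le_sq[of "f x"] by simp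
    then show "norm (indicator {a..b} x * f x) \<le> norm (indicator {a..b} x + (f x)\<^sup>2)"
      by (auto simp: indicator_def)
  qed
qed

lemma ind_L2_avg:
  fixes f :: "real \<Rightarrow> real"
  assumes fm: "f \<in> borel_measurable lborel" and fi: "integrable lborel (\<lambda>x. (f x)\<^sup>2)" and ab: "a \<le> b"
  shows "(\<integral>x. indicator {a..b} x * \<bar>f x\<bar> \<partial>lborel) \<le> (b - a + (\<integral>x. (f x)\<^sup>2 \<partial>lborel)) / 2"
proof -
  have i1: "integrable lborel (\<lambda>x. indicator {a..b} x * \<bar>f x\<bar>)"
    using integrable_abs[OF ind_L2_int[OF fm fi, of a b]] by (simp add: abs_mult)
  have "(\<integral>x. indicator {a..b} x * \<bar>f x\<bar> \<partial>lborel) \<le> (\<integral>x. (indicator {a..b} x + (f x)\<^sup>2) / 2 \<partial>lborel)"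
  proof (rule integral_mono[OF i1])
    show "integrable lborel (\<lambda>x. (indicator {a..b} x + (f x)\<^sup>2) / 2)"
      using ind_int fi by auto
    fix x show "indicator {a..b} x * \<bar>f x\<bar> \<le> (indicator {a..b} x + (f x)\<^sup>2) / 2"
      using abs_le_sq[of "f x"] by (auto simp: indicator_def)
  qed
  also have "\<dots> = (b - a + (\<integral>x. (f x)\<^sup>2 \<partial>lborel)) / 2"
    using ind_int[of a b] fi ab by (simp add: Bochner_Integration.integral_add)
  finally show ?thesis .
qed

lemma ind_L2_set:
  fixes f :: "real \<Rightarrow> real"
  assumes fm: "f \<in> borel_measurable lborel" and fi: "integrable lborel (\<lambda>x. (f x)\<^sup>2)"
  shows "set_integrable lborel {a..b} f"
  using ind_L2_int[OF fm fi] unfolding set_integrable_def by simp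

lemma Kf_meas2: "(\<lambda>t. Kf x t) \<in> borel_measurable lborel"
proof -
  have "(\<lambda>t. Kf x t) = (\<lambda>t. (if 0 < t \<and> t < x then 1 else 0) - (if x < t \<and> t < 0 then 1 else (0::real)))"
    by (auto simp: Kf_def indicator_def)
  also have "\<dots> \<in> borel_measurable lborel" by measurable
  finally show ?thesis .
qed

definition Uf :: "(real \<Rightarrow> real) \<Rightarrow> real \<Rightarrow> real" where
  "Uf w x = (\<integral>t. w t * Kf x t \<partial>lborel)"

lemma wK_int:
  fixes w :: "real \<Rightarrow> real"
  assumes wm: "w \<in> borel_measurable lborel" and wi: "integrable lborel (\<lambda>x. (w x)\<^sup>2)"
  shows "integrable lborel (\<lambda>t. w t * Kf x t)"
proof (rule Bochner_Integration.integrable_bound)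
  show "integrable lborel (\<lambda>t. \<bar>indicator {-\<bar>x\<bar>..\<bar>x\<bar>} t * w t\<bar>)"
    by (rule integrable_abs[OF ind_L2_int[OF wm wi]])
  show "(\<lambda>t. w t * Kf x t) \<in> borel_measurable lborel" using wm Kf_meas2[of x] by measurable
  show "AE t in lborel. norm (w t * Kf x t) \<le> norm (\<bar>indicator {-\<bar>x\<bar>..\<bar>x\<bar>} t * w t\<bar>)"
  proof (rule AE_I2)
    fix t
    have "\<bar>w t\<bar> * \<bar>Kf x t\<bar> \<le> \<bar>w t\<bar> * indicator {-\<bar>x\<bar>..\<bar>x\<bar>} t"
      by (rule mult_left_mono[OF Kf_bound]) simp
    then show "norm (w t * Kf x t) \<le> norm (\<bar>indicator {-\<bar>x\<bar>..\<bar>x\<bar>} t * w t\<bar>)"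
      by (simp add: abs_mult mult.commute)
  qed
qed

lemma Uf_diff:
  fixes w :: "real \<Rightarrow> real"
  assumes wm: "w \<in> borel_measurable lborel" and wi: "integrable lborel (\<lambda>x. (w x)\<^sup>2)" and xy: "x \<le> y"
  shows "\<bar>Uf w y - Uf w x\<bar> \<le> (\<integral>t. indicator {x..y} t * \<bar>w t\<bar> \<partial>lborel)"
proof -
  have "Uf w y - Uf w x = (\<integral>t. w t * (Kf y t - Kf x t) \<partial>lborel)"
    unfolding Uf_def using wK_int[OF wm wi, of x] wK_int[OF wm wi, of y]
    by (subst Bochner_Integration.integral_diff[symmetric]) (auto simp: algebra_simps)
  also have "\<bar>\<dots>\<bar> \<le> (\<integral>t. \<bar>w t * (Kf y t - Kf x t)\<bar> \<partial>lborel)"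
    by (rule integral_abs_bound)
  also have "\<dots> \<le> (\<integral>t. indicator {x..y} t * \<bar>w t\<bar> \<partial>lborel)"
  proof (rule integral_mono)
    show "integrable lborel (\<lambda>t. \<bar>w t * (Kf y t - Kf x t)\<bar>)"
      using wK_int[OF wm wi, of x] wK_int[OF wm wi, of y]
      by (intro integrable_abs) (simp add: algebra_simps)
    show "integrable lborel (\<lambda>t. indicator {x..y} t * \<bar>w t\<bar>)"
      using integrable_abs[OF ind_L2_int[OF wm wi, of x y]] by (simp add: abs_mult)
    fix t show "\<bar>w t * (Kf y t - Kf x t)\<bar> \<le> indicator {x..y} t * \<bar>w t\<bar>"
      using mult_left_mono[OF Kf_diff[OF xy, of t], of "\<bar>w t\<bar>"] by (simp add: abs_mult mult.commute)
  qed
  finally show ?thesis .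
qed


lemma Kf_meas': "(\<lambda>p. Kf (fst p) (snd p)) \<in> borel_measurable (lborel \<Otimes>\<^sub>M lborel)"
proof -
  have "(\<lambda>p. Kf (fst p) (snd p)) = (\<lambda>p. (if 0 < snd p \<and> snd p < fst p then 1 else 0) - (if fst p < snd p \<and> snd p < 0 then 1 else (0::real)))"
    by (auto simp: Kf_def indicator_def)
  also have "\<dots> \<in> borel_measurable (lborel \<Otimes>\<^sub>M lborel)" by measurable
  finally show ?thesis .
qed

lemma Kf_meas'': "(\<lambda>p. Kf (snd p) (fst p)) \<in> borel_measurable (lborel \<Otimes>\<^sub>M lborel)"
proof -
  have "(\<lambda>p. Kf (snd p) (fst p)) = (\<lambda>p. (if 0 < fst p \<and> fst p < snd p then 1 else 0) - (if snd p < fst p \<and> fst p < 0 then 1 else (0::real)))"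
    by (auto simp: Kf_def indicator_def)
  also have "\<dots> \<in> borel_measurable (lborel \<Otimes>\<^sub>M lborel)" by measurable
  finally show ?thesis .
qed

lemma Kf_le1: "\<bar>Kf x t\<bar> \<le> 1"
  by (auto simp: Kf_def indicator_def)

lemma U_weak:
  fixes w \<phi> :: "real \<Rightarrow> real"
  assumes wm: "w \<in> borel_measurable lborel" and wi: "integrable lborel (\<lambda>x. (w x)\<^sup>2)"
    and t: "tf \<phi> A B"
  shows "integrable lborel (\<lambda>x. Uf w x * deriv \<phi> x)"
    and "(\<integral>x. Uf w x * deriv \<phi> x \<partial>lborel) = - (\<integral>x. w x * \<phi> x \<partial>lborel)"
proof -
  define R where "R = max \<bar>A\<bar> \<bar>B\<bar>"
  have td: "tf (deriv \<phi>) A B" by (rule tf_deriv[OF t])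
  have zd: "deriv \<phi> x = 0" if "\<bar>x\<bar> > R" for x
  proof -
    have "x < A \<or> x > B" using that by (cases "x \<ge> 0") (auto simp: R_def)
    then show ?thesis using td by (auto simp: tf_def)
  qed
  have dm[measurable]: "deriv \<phi> \<in> borel_measurable lborel"
    using td cont_meas smooth_cont unfolding tf_def by blast
  have pm: "\<phi> \<in> borel_measurable lborel"
    using t cont_meas smooth_cont unfolding tf_def by blast
  have wm'[measurable]: "w \<in> borel_measurable lborel" by (rule wm)
  have km[measurable]: "(\<lambda>p. Kf (fst p) (snd p)) \<in> borel_measurable (lborel \<Otimes>\<^sub>M lborel)" by (rule Kf_meas')
  define C where "C = (\<integral>t. indicator {-R..R} t * \<bar>w t\<bar> \<partial>lborel)"
  define F where "F = (\<lambda>x t. deriv \<phi> x * (w t * Kf x t))"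
  have Fm: "(\<lambda>(x, t). F x t) \<in> borel_measurable (lborel \<Otimes>\<^sub>M lborel)"
  proof -
    have "(\<lambda>(x, t). F x t) = (\<lambda>p. deriv \<phi> (fst p) * (w (snd p) * Kf (fst p) (snd p)))"
      by (auto simp: F_def)
    also have "\<dots> \<in> borel_measurable (lborel \<Otimes>\<^sub>M lborel)" by measurable
    finally show ?thesis .
  qed
  have Fx: "integrable lborel (F x)" for x
    unfolding F_def by (intro integrable_mult_right wK_int[OF wm wi])
  have bnd: "(\<integral>t. norm (F x t) \<partial>lborel) \<le> \<bar>deriv \<phi> x\<bar> * C" for x
  proof -
    have "(\<integral>t. norm (F x t) \<partial>lborel) = \<bar>deriv \<phi> x\<bar> * (\<integral>t. \<bar>w t * Kf x t\<bar> \<partial>lborel)"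
      unfolding F_def by (simp add: abs_mult)
    also have "\<dots> \<le> \<bar>deriv \<phi> x\<bar> * C"
    proof (cases "\<bar>x\<bar> > R")
      case True then show ?thesis using zd by simp
    next
      case False
      have "(\<integral>t. \<bar>w t * Kf x t\<bar> \<partial>lborel) \<le> C"
        unfolding C_def
      proof (rule integral_mono)
        show "integrable lborel (\<lambda>t. \<bar>w t * Kf x t\<bar>)" by (intro integrable_abs wK_int[OF wm wi])
        show "integrable lborel (\<lambda>t. indicator {-R..R} t * \<bar>w t\<bar>)"
          using integrable_abs[OF ind_L2_int[OF wm wi, of "-R" R]] by (simp add: abs_mult)
        fix t
        have "\<bar>Kf x t\<bar> \<le> indicator {-R..R} t"
          using Kf_bound[of x t] Kf_le1[of x t] False by (auto simp: indicator_def split: if_splits)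
        then show "\<bar>w t * Kf x t\<bar> \<le> indicator {-R..R} t * \<bar>w t\<bar>"
          using mult_left_mono[of "\<bar>Kf x t\<bar>" "indicator {-R..R} t" "\<bar>w t\<bar>"]
          by (simp add: abs_mult mult.commute)
      qed
      then show ?thesis by (simp add: mult_left_mono)
    qed
    finally show ?thesis .
  qed
  have Fi: "integrable (lborel \<Otimes>\<^sub>M lborel) (\<lambda>(x, t). F x t)"
  proof (rule lborel_pair.Fubini_integrable)
    show "(\<lambda>(x, t). F x t) \<in> borel_measurable (lborel \<Otimes>\<^sub>M lborel)" by (rule Fm)
    show "AE x in lborel. integrable lborel (\<lambda>y. case (x, y) of (x, t) \<Rightarrow> F x t)"
      using Fx by simp
    show "integrable lborel (\<lambda>x. \<integral>y. norm (case (x, y) of (x, t) \<Rightarrow> F x t) \<partial>lborel)"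
    proof (rule Bochner_Integration.integrable_bound)
      show "integrable lborel (\<lambda>x. \<bar>deriv \<phi> x\<bar> * C)"
        using tf_integrable[OF td] by (intro integrable_mult_left integrable_abs)
      have "(\<lambda>(x, y). norm (F x y)) \<in> borel_measurable (lborel \<Otimes>\<^sub>M lborel)"
        using Fm by measurable
      then show "(\<lambda>x. \<integral>y. norm (case (x, y) of (x, t) \<Rightarrow> F x t) \<partial>lborel) \<in> borel_measurable lborel"
        using lborel.borel_measurable_lebesgue_integral[of "\<lambda>x y. norm (F x y)"] by simp
      show "AE x in lborel. norm (\<integral>y. norm (case (x, y) of (x, t) \<Rightarrow> F x t) \<partial>lborel) \<le> norm (\<bar>deriv \<phi> x\<bar> * C)"
      proof (rule AE_I2)
        fix x
        have "0 \<le> (\<integral>y. norm (F x y) \<partial>lborel)" by simp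
        then show "norm (\<integral>y. norm (case (x, y) of (x, t) \<Rightarrow> F x t) \<partial>lborel) \<le> norm (\<bar>deriv \<phi> x\<bar> * C)"
          using bnd[of x] by simp
      qed
    qed
  qed
  have inner1: "(\<integral>t. F x t \<partial>lborel) = deriv \<phi> x * Uf w x" for x
    unfolding F_def Uf_def by simp
  have "integrable lborel (\<lambda>x. \<integral>t. F x t \<partial>lborel)"
    using lborel_pair.integrable_fst[OF Fi] .
  then show "integrable lborel (\<lambda>x. Uf w x * deriv \<phi> x)"
    unfolding inner1 by (simp add: mult.commute)
  have inner2: "AE t in lborel. (\<integral>x. F x t \<partial>lborel) = - (w t * \<phi> t)"
    using AE_lborel_singleton[of 0]
  proof (rule eventually_mono)
    fix t :: real assume t0: "t \<noteq> 0"
    have "(\<integral>x. F x t \<partial>lborel) = (\<integral>x. deriv \<phi> x * Kf x t \<partial>lborel) * w t"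
    proof -
      have "(\<lambda>x. F x t) = (\<lambda>x. deriv \<phi> x * Kf x t * w t)" unfolding F_def by (simp add: algebra_simps)
      then show ?thesis by simp
    qed
    also have "\<dots> = - (w t * \<phi> t)" using deriv_Kf[OF t t0] by simp
    finally show "(\<integral>x. F x t \<partial>lborel) = - (w t * \<phi> t)" .
  qed
  have "(\<integral>x. Uf w x * deriv \<phi> x \<partial>lborel) = (\<integral>x. (\<integral>t. F x t \<partial>lborel) \<partial>lborel)"
    unfolding inner1 by (simp add: mult.commute)
  also have "\<dots> = (\<integral>t. (\<integral>x. F x t \<partial>lborel) \<partial>lborel)"
    using lborel_pair.Fubini_integral[OF Fi] by simp
  also have "\<dots> = (\<integral>t. - (w t * \<phi> t) \<partial>lborel)"
  proof (rule integral_cong_AE)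
    show "(\<lambda>t. \<integral>x. F x t \<partial>lborel) \<in> borel_measurable lborel"
    proof -
      have km2[measurable]: "(\<lambda>p. Kf (snd p) (fst p)) \<in> borel_measurable (lborel \<Otimes>\<^sub>M lborel)"
        by (rule Kf_meas'')
      have "(\<lambda>(t, x). F x t) = (\<lambda>p. deriv \<phi> (snd p) * (w (fst p) * Kf (snd p) (fst p)))"
        by (auto simp: F_def)
      also have "\<dots> \<in> borel_measurable (lborel \<Otimes>\<^sub>M lborel)" by measurable
      finally have "(\<lambda>(t, x). F x t) \<in> borel_measurable (lborel \<Otimes>\<^sub>M lborel)" .
      then show ?thesis using lborel.borel_measurable_lebesgue_integral[of "\<lambda>t x. F x t"] by simp
    qed
    show "(\<lambda>t. - (w t * \<phi> t)) \<in> borel_measurable lborel" using wm pm by measurable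
    show "AE t in lborel. (\<integral>x. F x t \<partial>lborel) = - (w t * \<phi> t)" by (rule inner2)
  qed
  also have "\<dots> = - (\<integral>x. w x * \<phi> x \<partial>lborel)" by simp
  finally show "(\<integral>x. Uf w x * deriv \<phi> x \<partial>lborel) = - (\<integral>x. w x * \<phi> x \<partial>lborel)" .
qed


lemma Uf_meas:
  assumes wm: "w \<in> borel_measurable lborel"
  shows "Uf w \<in> borel_measurable lborel"
proof -
  have [measurable]: "w \<in> borel_measurable lborel" by (rule wm)
  have [measurable]: "(\<lambda>p. Kf (fst p) (snd p)) \<in> borel_measurable (lborel \<Otimes>\<^sub>M lborel)" by (rule Kf_meas')
  have "(\<lambda>(x, t). w t * Kf x t) = (\<lambda>p. w (snd p) * Kf (fst p) (snd p))" by auto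
  also have "\<dots> \<in> borel_measurable (lborel \<Otimes>\<^sub>M lborel)" by measurable
  finally have "(\<lambda>(x, t). w t * Kf x t) \<in> borel_measurable (lborel \<Otimes>\<^sub>M lborel)" .
  then show ?thesis unfolding Uf_def[abs_def]
    using lborel.borel_measurable_lebesgue_integral[of "\<lambda>x t. w t * Kf x t"] by simp
qed

lemma Uf_bound:
  fixes w :: "real \<Rightarrow> real"
  assumes wm: "w \<in> borel_measurable lborel" and wi: "integrable lborel (\<lambda>x. (w x)\<^sup>2)" and xR: "\<bar>x\<bar> \<le> R"
  shows "\<bar>Uf w x\<bar> \<le> (\<integral>t. indicator {-R..R} t * \<bar>w t\<bar> \<partial>lborel)"
proof -
  have "\<bar>Uf w x\<bar> \<le> (\<integral>t. \<bar>w t * Kf x t\<bar> \<partial>lborel)" unfolding Uf_def by (rule integral_abs_bound)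
  also have "\<dots> \<le> (\<integral>t. indicator {-R..R} t * \<bar>w t\<bar> \<partial>lborel)"
  proof (rule integral_mono)
    show "integrable lborel (\<lambda>t. \<bar>w t * Kf x t\<bar>)" by (intro integrable_abs wK_int[OF wm wi])
    show "integrable lborel (\<lambda>t. indicator {-R..R} t * \<bar>w t\<bar>)"
      using integrable_abs[OF ind_L2_int[OF wm wi, of "-R" R]] by (simp add: abs_mult)
    fix t
    have "\<bar>Kf x t\<bar> \<le> indicator {-R..R} t"
      using Kf_bound[of x t] Kf_le1[of x t] xR by (auto simp: indicator_def split: if_splits)
    then show "\<bar>w t * Kf x t\<bar> \<le> indicator {-R..R} t * \<bar>w t\<bar>"
      using mult_left_mono[of "\<bar>Kf x t\<bar>" "indicator {-R..R} t" "\<bar>w t\<bar>"]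
      by (simp add: abs_mult mult.commute)
  qed
  finally show ?thesis .
qed

lemma Uf_set_int:
  fixes w :: "real \<Rightarrow> real"
  assumes wm: "w \<in> borel_measurable lborel" and wi: "integrable lborel (\<lambda>x. (w x)\<^sup>2)"
  shows "set_integrable lborel {a..b} (Uf w)"
  unfolding set_integrable_def
proof (rule Bochner_Integration.integrable_bound)
  define R where "R = max \<bar>a\<bar> \<bar>b\<bar>"
  define C where "C = (\<integral>t. indicator {-R..R} t * \<bar>w t\<bar> \<partial>lborel)"
  show "integrable lborel (\<lambda>x. C * indicator {a..b} x)"
    using ind_int by (intro integrable_mult_right) auto
  show "(\<lambda>x. indicator {a..b} x *\<^sub>R Uf w x) \<in> borel_measurable lborel"
    using Uf_meas[OF wm] by measurable
  show "AE x in lborel. norm (indicator {a..b} x *\<^sub>R Uf w x) \<le> norm (C * indicator {a..b} x)"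
  proof (rule AE_I2)
    fix x
    have C0: "0 \<le> C" unfolding C_def by (intro integral_nonneg_AE) auto
    show "norm (indicator {a..b} x *\<^sub>R Uf w x) \<le> norm (C * indicator {a..b} x)"
    proof (cases "x \<in> {a..b}")
      case True
      then have "\<bar>x\<bar> \<le> R" by (auto simp: R_def)
      then show ?thesis using True Uf_bound[OF wm wi, of x R] C0 by (simp add: C_def)
    qed simp
  qed
qed

lemma test_fun_tf: "test_fun \<phi> \<Longrightarrow> \<exists>R. tf \<phi> (-R) R"
proof -
  assume h: "test_fun \<phi>"
  then obtain R where R: "\<And>x. x \<in> {x. \<phi> x \<noteq> 0} \<Longrightarrow> norm x \<le> R"
    unfolding test_fun_def bounded_iff by blast
  have "\<phi> x = 0" if "x < -R \<or> x > R" for x using R[of x] that by force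
  then show ?thesis using h by (auto simp: tf_def test_fun_def smooth_alt)
qed

lemma Linfty:
  fixes u w :: "real \<Rightarrow> real"
  assumes uL: "u \<in> Lp 2" and wL: "w \<in> Lp 2" and wd: "weak_deriv u w"
  shows "AE x in lborel. \<bar>u x\<bar> \<le> 1 + ((\<integral>x. (u x)\<^sup>2 \<partial>lborel) + (\<integral>x. (w x)\<^sup>2 \<partial>lborel)) / 2"
proof -
  note um = Lp2_sq(1)[OF uL] and ui = Lp2_sq(2)[OF uL]
  note wm = Lp2_sq(1)[OF wL] and wi = Lp2_sq(2)[OF wL]
  define g where "g = (\<lambda>x. u x - Uf w x)"
  have gm: "g \<in> borel_measurable lborel" unfolding g_def using um Uf_meas[OF wm] by measurable
  have gi: "set_integrable lborel {a..b} g" for a b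
    unfolding g_def using ind_L2_set[OF um ui, of a b] Uf_set_int[OF wm wi, of a b]
    by (rule set_integral_diff)
  have H: "(\<integral>x. g x * deriv \<phi> x \<partial>lborel) = 0" if tfun: "test_fun \<phi>" for \<phi>
  proof -
    obtain R where t: "tf \<phi> (-R) R" using test_fun_tf[OF tfun] by blast
    have i1: "integrable lborel (\<lambda>x. u x * deriv \<phi> x)"
      by (rule int_g_tf[OF um _ tf_deriv[OF t]]) (rule ind_L2_set[OF um ui])
    have "(\<integral>x. g x * deriv \<phi> x \<partial>lborel) = (\<integral>x. u x * deriv \<phi> x \<partial>lborel) - (\<integral>x. Uf w x * deriv \<phi> x \<partial>lborel)"
      unfolding g_def using i1 U_weak(1)[OF wm wi t]
      by (subst Bochner_Integration.integral_diff[symmetric]) (auto simp: algebra_simps)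
    also have "\<dots> = 0"
      using wd tfun U_weak(2)[OF wm wi t] unfolding weak_deriv_def by simp
    finally show ?thesis .
  qed
  obtain c where c: "AE x in lborel. g x = c" using ae_const[OF gm gi H] by blast
  define Iu where "Iu = (\<integral>x. (u x)\<^sup>2 \<partial>lborel)"
  define Iw where "Iw = (\<integral>x. (w x)\<^sup>2 \<partial>lborel)"
  show ?thesis
    using c
  proof (rule eventually_mono)
    fix x assume gx: "g x = c"
    define W where "W = (\<integral>t. indicator {x..x+1} t * \<bar>w t\<bar> \<partial>lborel)"
    have pt: "indicator {x..x+1} y * \<bar>u x\<bar> \<le> indicator {x..x+1} y * (\<bar>u y\<bar> + W)" if gy: "g y = c" for y
    proof (cases "y \<in> {x..x+1}")
      case True
      have "u x - u y = Uf w x - Uf w y" using gx gy by (simp add: g_def algebra_simps)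
      then have "\<bar>u x\<bar> \<le> \<bar>u y\<bar> + \<bar>Uf w y - Uf w x\<bar>" by linarith
      also have "\<bar>Uf w y - Uf w x\<bar> \<le> (\<integral>t. indicator {x..y} t * \<bar>w t\<bar> \<partial>lborel)"
        using Uf_diff[OF wm wi] True by auto
      also have "\<dots> \<le> W" unfolding W_def
      proof (rule integral_mono)
        show "integrable lborel (\<lambda>t. indicator {x..y} t * \<bar>w t\<bar>)"
          using integrable_abs[OF ind_L2_int[OF wm wi, of x y]] by (simp add: abs_mult)
        show "integrable lborel (\<lambda>t. indicator {x..x+1} t * \<bar>w t\<bar>)"
          using integrable_abs[OF ind_L2_int[OF wm wi, of x "x+1"]] by (simp add: abs_mult)
        fix t show "indicator {x..y} t * \<bar>w t\<bar> \<le> indicator {x..x + 1} t * \<bar>w t\<bar>"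
          using True by (auto simp: indicator_def)
      qed
      finally show ?thesis using True by simp
    qed simp
    have iu: "integrable lborel (\<lambda>y. indicator {x..x+1} y * \<bar>u y\<bar>)"
      using integrable_abs[OF ind_L2_int[OF um ui, of x "x+1"]] by (simp add: abs_mult)
    have "\<bar>u x\<bar> = (\<integral>y. indicator {x..x+1} y * \<bar>u x\<bar> \<partial>lborel)"
      by (simp add: measure_lborel_Icc)
    also have "\<dots> \<le> (\<integral>y. indicator {x..x+1} y * (\<bar>u y\<bar> + W) \<partial>lborel)"
    proof (rule integral_mono_AE)
      show "integrable lborel (\<lambda>y. indicator {x..x+1} y * \<bar>u x\<bar>)"
        using ind_int by (intro integrable_mult_left) auto
      show "integrable lborel (\<lambda>y. indicator {x..x+1} y * (\<bar>u y\<bar> + W))"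
        using iu ind_int[of x "x+1"] by (simp add: distrib_left)
      show "AE y in lborel. indicator {x..x+1} y * \<bar>u x\<bar> \<le> indicator {x..x+1} y * (\<bar>u y\<bar> + W)"
        using c by (rule eventually_mono) (rule pt)
    qed
    also have "\<dots> = (\<integral>y. indicator {x..x+1} y * \<bar>u y\<bar> \<partial>lborel) + W"
      using iu ind_int[of x "x+1"] by (simp add: distrib_left measure_lborel_Icc)
    also have "(\<integral>y. indicator {x..x+1} y * \<bar>u y\<bar> \<partial>lborel) \<le> (1 + Iu) / 2"
      using ind_L2_avg[OF um ui, of x "x+1"] by (simp add: Iu_def)
    also have "W \<le> (1 + Iw) / 2"
      using ind_L2_avg[OF wm wi, of x "x+1"] by (simp add: Iw_def W_def)
    finally show "\<bar>u x\<bar> \<le> 1 + ((\<integral>x. (u x)\<^sup>2 \<partial>lborel) + (\<integral>x. (w x)\<^sup>2 \<partial>lborel)) / 2"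
      by (simp add: Iu_def Iw_def field_simps)
  qed
qed


lemma T2_bound:
  fixes u v :: "real \<Rightarrow> real"
  assumes um: "u \<in> borel_measurable lborel" and ui: "integrable lborel (\<lambda>x. (u x)\<^sup>2)"
    and vm: "v \<in> borel_measurable lborel" and vi: "integrable lborel (\<lambda>x. (v x)\<^sup>2)"
    and M0: "0 \<le> M" and ub: "AE x in lborel. \<bar>u x\<bar> \<le> M"
  shows "(\<integral>x. v x * (u x)\<^sup>2 \<partial>lborel) \<ge> - (M / 2) * ((\<integral>x. (v x)\<^sup>2 \<partial>lborel) + (\<integral>x. (u x)\<^sup>2 \<partial>lborel))"
proof (cases "integrable lborel (\<lambda>x. v x * (u x)\<^sup>2)")
  case True
  have "(\<integral>x. - (M / 2) * ((v x)\<^sup>2 + (u x)\<^sup>2) \<partial>lborel) \<le> (\<integral>x. v x * (u x)\<^sup>2 \<partial>lborel)"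
  proof (rule integral_mono_AE)
    show "integrable lborel (\<lambda>x. - (M / 2) * ((v x)\<^sup>2 + (u x)\<^sup>2))" using vi ui by auto
    show "integrable lborel (\<lambda>x. v x * (u x)\<^sup>2)" by (rule True)
    show "AE x in lborel. - (M / 2) * ((v x)\<^sup>2 + (u x)\<^sup>2) \<le> v x * (u x)\<^sup>2"
      using ub
    proof (rule eventually_mono)
      fix x assume ux: "\<bar>u x\<bar> \<le> M"
      have "\<bar>v x * (u x)\<^sup>2\<bar> = (\<bar>v x\<bar> * \<bar>u x\<bar>) * \<bar>u x\<bar>" by (simp add: abs_mult power2_eq_square)
      also have "\<dots> \<le> (\<bar>v x\<bar> * \<bar>u x\<bar>) * M" by (rule mult_left_mono[OF ux]) simp
      also have "\<bar>v x\<bar> * \<bar>u x\<bar> \<le> ((v x)\<^sup>2 + (u x)\<^sup>2) / 2"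
      proof -
        have "0 \<le> (\<bar>v x\<bar> - \<bar>u x\<bar>)\<^sup>2" by simp
        then show ?thesis by (simp add: power2_eq_square algebra_simps abs_mult_self_eq)
      qed
      then have "(\<bar>v x\<bar> * \<bar>u x\<bar>) * M \<le> ((v x)\<^sup>2 + (u x)\<^sup>2) / 2 * M" by (rule mult_right_mono[OF _ M0])
      finally have "\<bar>v x * (u x)\<^sup>2\<bar> \<le> (M / 2) * ((v x)\<^sup>2 + (u x)\<^sup>2)" by (simp add: field_simps)
      then show "- (M / 2) * ((v x)\<^sup>2 + (u x)\<^sup>2) \<le> v x * (u x)\<^sup>2" by linarith
    qed
  qed
  then show ?thesis using vi ui by (simp add: Bochner_Integration.integral_add)
next
  case False
  then have "(\<integral>x. v x * (u x)\<^sup>2 \<partial>lborel) = 0" by (rule not_integrable_integral_eq)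
  moreover have "0 \<le> (\<integral>x. (v x)\<^sup>2 \<partial>lborel)" "0 \<le> (\<integral>x. (u x)\<^sup>2 \<partial>lborel)" by simp_all
  ultimately show ?thesis using M0 by (simp add: mult_nonneg_nonneg)
qed

theorem proposition1:
  fixes p a \<gamma> \<mu> d :: real
  assumes "-1 < p" "p < 0" "a > 0" "\<gamma> > 0" "\<mu> > 0" "d > 0"
  shows "Imin a p \<gamma> \<mu> d > -\<infinity>"
proof -
  define K where "K = ((1 + \<mu>) / 2) * (\<mu> / d + \<mu>)"
  have "ereal (- K) \<le> Imin a p \<gamma> \<mu> d"
    unfolding Imin_def
  proof (rule INF_greatest)
    fix uv assume "uv \<in> Xset p \<mu> d"
    then obtain u v w where uv: "uv = (u, v)" and uH: "u \<in> H1" and vL2: "v \<in> Lp 2" and vL4: "v \<in> Lp 4"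
      and wL: "w \<in> Lp 2" and wd: "weak_deriv u w"
      and eq: "Lnorm2sq u + Lnorm2sq w + d * Lnorm2sq v = \<mu>"
      unfolding Xset_def by auto
    have uL: "u \<in> Lp 2" using uH by (simp add: H1_def)
    note um = Lp2_sq(1)[OF uL] and ui = Lp2_sq(2)[OF uL]
    note vm = Lp2_sq(1)[OF vL2] and vi = Lp2_sq(2)[OF vL2]
    define Iu where "Iu = (\<integral>x. (u x)\<^sup>2 \<partial>lborel)"
    define Iw where "Iw = (\<integral>x. (w x)\<^sup>2 \<partial>lborel)"
    define Iv where "Iv = (\<integral>x. (v x)\<^sup>2 \<partial>lborel)"
    have Iu0: "0 \<le> Iu" and Iw0: "0 \<le> Iw" and Iv0: "0 \<le> Iv" by (simp_all add: Iu_def Iw_def Iv_def)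
    have eq': "Iu + Iw + d * Iv = \<mu>" using eq by (simp add: Lnorm2sq_def Iu_def Iw_def Iv_def)
    have dIv: "d * Iv \<ge> 0" using Iv0 assms(6) by simp
    have Iub: "Iu \<le> \<mu>" and Iwb: "Iw \<le> \<mu>" using eq' Iu0 Iw0 dIv by linarith+
    have Ivb: "Iv \<le> \<mu> / d" using eq' Iu0 Iw0 assms(6) by (simp add: field_simps)
    define M where "M = 1 + (Iu + Iw) / 2"
    have M0: "0 \<le> M" using Iu0 Iw0 by (simp add: M_def)
    have Mb: "M \<le> 1 + \<mu>" using Iub Iwb by (simp add: M_def)
    have ub: "AE x in lborel. \<bar>u x\<bar> \<le> M"
      using Linfty[OF uL wL wd] by (simp add: M_def Iu_def Iw_def)
    have T2: "(\<integral>x. v x * (u x)\<^sup>2 \<partial>lborel) \<ge> - (M / 2) * (Iv + Iu)"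
      using T2_bound[OF um ui vm vi M0 ub] by (simp add: Iu_def Iv_def)
    have "(M / 2) * (Iv + Iu) \<le> ((1 + \<mu>) / 2) * (\<mu> / d + \<mu>)"
      by (rule mult_mono) (use Mb Ivb Iub M0 Iu0 Iv0 assms(5,6) in auto)
    then have T2': "(\<integral>x. v x * (u x)\<^sup>2 \<partial>lborel) \<ge> - K" using T2 unfolding K_def by linarith
    have T1: "0 \<le> 2 * a / (p + 2) * (\<integral>x. \<bar>u x\<bar> powr (p + 2) \<partial>lborel)"
      using assms(1,3) by (intro mult_nonneg_nonneg divide_nonneg_pos integral_nonneg_AE) auto
    have T3: "0 \<le> \<gamma> / 4 * (\<integral>x. (v x) ^ 4 \<partial>lborel)"
    proof -
      have "\<And>x. 0 \<le> (v x) ^ 4" by (simp add: zero_le_even_power)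
      then show ?thesis using assms(4) by (intro mult_nonneg_nonneg integral_nonneg_AE) auto
    qed
    have "- K \<le> tau a p \<gamma> u v" unfolding tau_def using T1 T2' T3 by linarith
    then show "ereal (- K) \<le> ereal (tau a p \<gamma> (fst uv) (snd uv))" using uv by simp
  qed
  then show ?thesis by (metis ereal_MInfty_lessI order_less_le_trans MInfty_neq_ereal(1) ereal_less(3))
qed


end
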